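(* Let $\Omega\subset\mathbb{R}^n$ be a convex body. For any $\varepsilon\in[0,\mathrm{In}(\Omega)]$, $$\mathrm{vol}(L_\varepsilon(\Omega))\le g(\varepsilon):=\mathrm{vol}(\Omega)\left(1-\Big(1-\frac{\varepsilon}{\mathrm{In}(\Omega)}\Big)^{n}\right).$$
   Context: A convex body is a convex, closed subset of $\mathbb{R}^n$ with non-empty interior. $\mathrm{vol}$ is $n$-dimensional Lebesgue measure. $\mathrm{In}(\Omega)$ is the inradius of $\Omega$: the radius of the largest ball contained in $\Omega$. The $\varepsilon$-inner neighbourhood is $L_\varepsilon(\Omega)=\{x\in\Omega:\|x-y\|\le\varepsilon\text{ for some }y\in\partial\Omega\}$. *)

theory Defs
  imports "HOL-Analysis.Analysis"
begin

definition convex_body :: "'a::euclidean_space set \<Rightarrow> bool" where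
  "convex_body \<Omega> \<longleftrightarrow> convex \<Omega> \<and> closed \<Omega> \<and> bounded \<Omega> \<and> interior \<Omega> \<noteq> {}"

definition inradius :: "'a::euclidean_space set \<Rightarrow> real" where
  "inradius \<Omega> = Sup {r. \<exists>x. cball x r \<subseteq> \<Omega>}"

definition inner_nbhd :: "real \<Rightarrow> 'a::euclidean_space set \<Rightarrow> 'a set" where
  "inner_nbhd \<epsilon> \<Omega> = {x \<in> \<Omega>. \<exists>y \<in> frontier \<Omega>. dist x y \<le> \<epsilon>}"

end

theory Submission
  imports Defs
begin

lemma ball_claim:
  fixes \<Omega> :: "'a::euclidean_space set"
  assumes cv: "convex \<Omega>" and cb: "cball x0 \<rho> \<subseteq> \<Omega>" and rp: "0 < \<rho>"
    and t0: "0 < t" and t1: "t \<le> 1" and y: "y \<in> interior \<Omega>"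
  shows "\<exists>e > (1 - t) * \<rho>. ball ((1 - t) *\<^sub>R x0 + t *\<^sub>R y) e \<subseteq> \<Omega>"
proof -
  obtain \<delta> where d0: "\<delta> > 0" and db: "ball y \<delta> \<subseteq> \<Omega>"
    using y by (meson mem_interior)
  define e where "e = (1 - t) * \<rho> + t * \<delta>"
  have e0: "e > 0" using t0 t1 rp d0 unfolding e_def
    by (smt (verit) mult_nonneg_nonneg mult_pos_pos)
  have egt: "e > (1 - t) * \<rho>" unfolding e_def using t0 d0 by simp
  have "ball ((1 - t) *\<^sub>R x0 + t *\<^sub>R y) e \<subseteq> \<Omega>"
  proof
    fix w assume w: "w \<in> ball ((1 - t) *\<^sub>R x0 + t *\<^sub>R y) e"
    define v where "v = w - ((1 - t) *\<^sub>R x0 + t *\<^sub>R y)"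
    have nv: "norm v < e" using w unfolding v_def by (simp add: dist_norm norm_minus_commute)
    define a where "a = (\<rho> / e) *\<^sub>R v"
    define b where "b = (\<delta> / e) *\<^sub>R v"
    have na: "norm a \<le> \<rho>"
    proof -
      have "norm a = \<rho> / e * norm v" unfolding a_def using rp e0 by simp
      also have "\<dots> \<le> \<rho> / e * e" using nv rp e0 by (intro mult_left_mono) auto
      finally show ?thesis using e0 by simp
    qed
    have nb: "norm b < \<delta>"
    proof -
      have "norm b = \<delta> / e * norm v" unfolding b_def using d0 e0 by simp
      also have "\<dots> < \<delta> / e * e" using nv d0 e0 by (intro mult_strict_left_mono) auto
      finally show ?thesis using e0 by simp
    qed
    have xa: "x0 + a \<in> \<Omega>" using cb na by (auto simp: dist_norm)
    have yb: "y + b \<in> \<Omega>" using db nb by (auto simp: dist_norm)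
    have "(1 - t) *\<^sub>R a + t *\<^sub>R b = (((1 - t) * \<rho> + t * \<delta>) / e) *\<^sub>R v"
      unfolding a_def b_def by (simp add: scaleR_add_left[symmetric] add_divide_distrib)
    also have "\<dots> = v" using e0 unfolding e_def by simp
    finally have "(1 - t) *\<^sub>R (x0 + a) + t *\<^sub>R (y + b) = w"
      unfolding v_def by (simp add: algebra_simps)
    moreover have "(1 - t) *\<^sub>R (x0 + a) + t *\<^sub>R (y + b) \<in> \<Omega>"
      using cv xa yb t0 t1 by (intro convexD) auto
    ultimately show "w \<in> \<Omega>" by simp
  qed
  then show ?thesis using egt by blast
qed

lemma key:
  fixes \<Omega> :: "'a::euclidean_space set"
  assumes cbd: "convex_body \<Omega>" and cb: "cball x0 \<rho> \<subseteq> \<Omega>" and rp: "0 < \<rho>"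
    and e0: "0 \<le> \<epsilon>" and el: "\<epsilon> < \<rho>"
  shows "measure lebesgue (inner_nbhd \<epsilon> \<Omega>) \<le> measure lebesgue \<Omega> * (1 - (1 - \<epsilon> / \<rho>) ^ DIM('a))"
proof -
  have cv: "convex \<Omega>" and cl: "closed \<Omega>" and bd: "bounded \<Omega>"
    using cbd unfolding convex_body_def by auto
  define t where "t = 1 - \<epsilon> / \<rho>"
  have t0: "0 < t" and t1: "t \<le> 1" unfolding t_def using rp e0 el by (auto simp: field_simps)
  have epsr: "\<epsilon> = (1 - t) * \<rho>" unfolding t_def using rp by simp
  define A where "A = (\<lambda>y. (1 - t) *\<^sub>R x0 + t *\<^sub>R y) ` interior \<Omega>"
  have AO: "A \<subseteq> \<Omega>"
  proof
    fix z assume "z \<in> A"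
    then obtain y where y: "y \<in> interior \<Omega>" and z: "z = (1 - t) *\<^sub>R x0 + t *\<^sub>R y"
      unfolding A_def by auto
    obtain e where "e > (1 - t) * \<rho>" "ball z e \<subseteq> \<Omega>"
      using ball_claim[OF cv cb rp t0 t1 y] z by auto
    moreover have "e > 0" using calculation t1 rp
      by (smt (verit) mult_nonneg_nonneg)
    ultimately show "z \<in> \<Omega>" by auto
  qed
  have LA: "inner_nbhd \<epsilon> \<Omega> \<subseteq> \<Omega> - A"
  proof
    fix x assume x: "x \<in> inner_nbhd \<epsilon> \<Omega>"
    then obtain f where f: "f \<in> frontier \<Omega>" "dist x f \<le> \<epsilon>" and xO: "x \<in> \<Omega>"
      unfolding inner_nbhd_def by auto
    have "x \<notin> A"
    proof
      assume "x \<in> A"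
      then obtain y where y: "y \<in> interior \<Omega>" and z: "x = (1 - t) *\<^sub>R x0 + t *\<^sub>R y"
        unfolding A_def by auto
      obtain e where ee: "e > (1 - t) * \<rho>" "ball x e \<subseteq> \<Omega>"
        using ball_claim[OF cv cb rp t0 t1 y] z by auto
      have "f \<in> ball x e" using f ee epsr by auto
      then have "f \<in> interior \<Omega>" using ee by (meson interior_maximal open_ball subsetD)
      then show False using f by (simp add: frontier_def)
    qed
    then show "x \<in> \<Omega> - A" using xO by auto
  qed
  have Oc: "compact \<Omega>" using cl bd by (simp add: compact_eq_bounded_closed)
  have Om: "\<Omega> \<in> lmeasurable" using Oc by (rule lmeasurable_compact)
  have Aopen: "open A" unfolding A_def using t0 by (intro open_affinity) auto
  have Abd: "bounded A" using bounded_subset[OF bd AO] .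
  have Am: "A \<in> lmeasurable" using Aopen Abd by (simp add: lmeasurable_open)
  have "A = (\<lambda>y. t *\<^sub>R y + (1 - t) *\<^sub>R x0) ` interior \<Omega>"
    unfolding A_def by (simp add: add.commute)
  then have "measure lebesgue A = \<bar>t\<bar> ^ DIM('a) * measure lebesgue (interior \<Omega>)"
    using measure_lebesgue_affine[of t "(1 - t) *\<^sub>R x0" "interior \<Omega>"] by simp
  also have "measure lebesgue (interior \<Omega>) = measure lebesgue \<Omega>"
    using measure_interior[OF bd negligible_convex_frontier[OF cv]] .
  finally have mA: "measure lebesgue A = t ^ DIM('a) * measure lebesgue \<Omega>" using t0 by simp
  have mD: "measure lebesgue (\<Omega> - A) = measure lebesgue \<Omega> - measure lebesgue A"
    using Om Am AO by (intro measure_Diff) (auto simp: fmeasurable_def)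
  have nn: "0 \<le> measure lebesgue \<Omega> * (1 - t ^ DIM('a))"
    using t0 t1 by (simp add: power_le_one)
  show ?thesis
  proof (cases "inner_nbhd \<epsilon> \<Omega> \<in> sets lebesgue")
    case True
    have "measure lebesgue (inner_nbhd \<epsilon> \<Omega>) \<le> measure lebesgue (\<Omega> - A)"
      using LA True Om Am by (intro measure_mono_fmeasurable) auto
    then show ?thesis using mD mA unfolding t_def[symmetric] by (simp add: algebra_simps)
  next
    case False
    then show ?thesis using nn unfolding t_def[symmetric] by (simp add: measure_notin_sets)
  qed
qed

theorem mainTheorem3:
  fixes \<Omega> :: "'a::euclidean_space set" and \<epsilon> :: real
  assumes "convex_body \<Omega>"
    and "0 \<le> \<epsilon>" and "\<epsilon> \<le> inradius \<Omega>"
  shows "measure lebesgue (inner_nbhd \<epsilon> \<Omega>)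
           \<le> measure lebesgue \<Omega> * (1 - (1 - \<epsilon> / inradius \<Omega>) ^ DIM('a))"
proof -
  have cv: "convex \<Omega>" and cl: "closed \<Omega>" and bd: "bounded \<Omega>" and ine: "interior \<Omega> \<noteq> {}"
    using assms(1) unfolding convex_body_def by auto
  define S where "S = {r. \<exists>x. cball x r \<subseteq> \<Omega>}"
  have r_def: "inradius \<Omega> = Sup S" unfolding inradius_def S_def ..
  have bddS: "bdd_above S"
  proof (rule bdd_aboveI[of _ "diameter \<Omega>"])
    fix r assume "r \<in> S"
    then obtain x where x: "cball x r \<subseteq> \<Omega>" unfolding S_def by auto
    have "diameter (cball x r) \<le> diameter \<Omega>" using x bd by (rule diameter_subset)
    moreover have "0 \<le> diameter \<Omega>" by (simp add: diameter_ge_0 bd)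
    ultimately show "r \<le> diameter \<Omega>" by (auto split: if_splits)
  qed
  obtain x1 e1 where e1: "e1 > 0" "ball x1 e1 \<subseteq> \<Omega>"
    using ine by (metis all_not_in_conv mem_interior)
  have "e1 / 2 \<in> S" unfolding S_def using e1
    by (intro CollectI exI[of _ x1]) (auto simp: subset_iff)
  then have rpos: "inradius \<Omega> > 0" unfolding r_def using bddS e1
    by (smt (verit) cSup_upper field_sum_of_halves)
  have Om: "\<Omega> \<in> lmeasurable"
    using cl bd by (simp add: compact_eq_bounded_closed lmeasurable_compact)
  show ?thesis
  proof (cases "\<epsilon> = inradius \<Omega>")
    case True
    have "measure lebesgue (inner_nbhd \<epsilon> \<Omega>) \<le> measure lebesgue \<Omega>"
    proof (cases "inner_nbhd \<epsilon> \<Omega> \<in> sets lebesgue")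
      case True
      then show ?thesis using Om by (intro measure_mono_fmeasurable) (auto simp: inner_nbhd_def)
    next
      case False
      then show ?thesis by (simp add: measure_notin_sets)
    qed
    moreover have "(1 - \<epsilon> / inradius \<Omega>) ^ DIM('a) = 0" using True rpos by simp
    then have "measure lebesgue \<Omega> * (1 - (1 - \<epsilon> / inradius \<Omega>) ^ DIM('a)) = measure lebesgue \<Omega>"
      by simp
    ultimately show ?thesis by linarith
  next
    case False
    then have el: "\<epsilon> < inradius \<Omega>" using assms(3) by simp
    define M where "M = measure lebesgue \<Omega>"
    have ev: "eventually (\<lambda>\<rho>. measure lebesgue (inner_nbhd \<epsilon> \<Omega>) \<le> M * (1 - (1 - \<epsilon> / \<rho>) ^ DIM('a))) (at_left (inradius \<Omega>))"
      using eventually_at_left_real[OF el]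
    proof (rule eventually_mono)
      fix \<rho> assume \<rho>: "\<rho> \<in> {\<epsilon><..<inradius \<Omega>}"
      then obtain s where s: "s \<in> S" "\<rho> < s"
        using less_cSup_iff[of S \<rho>] bddS \<open>e1 / 2 \<in> S\<close> unfolding r_def by auto
      then obtain x where "cball x s \<subseteq> \<Omega>" unfolding S_def by auto
      moreover have "cball x \<rho> \<subseteq> cball x s" using s(2) by (intro subset_cball) simp
      ultimately have cbr: "cball x \<rho> \<subseteq> \<Omega>" by (rule order_trans[rotated])
      have rp: "0 < \<rho>" and erh: "\<epsilon> < \<rho>" using \<rho> assms(2) by auto
      show "measure lebesgue (inner_nbhd \<epsilon> \<Omega>) \<le> M * (1 - (1 - \<epsilon> / \<rho>) ^ DIM('a))"
        unfolding M_def by (rule key[OF assms(1) cbr rp assms(2) erh])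
    qed
    have lim: "((\<lambda>\<rho>. M * (1 - (1 - \<epsilon> / \<rho>) ^ DIM('a))) \<longlongrightarrow> M * (1 - (1 - \<epsilon> / inradius \<Omega>) ^ DIM('a))) (at_left (inradius \<Omega>))"
      using rpos by (intro tendsto_intros) auto
    have "measure lebesgue (inner_nbhd \<epsilon> \<Omega>) \<le> M * (1 - (1 - \<epsilon> / inradius \<Omega>) ^ DIM('a))"
      by (rule tendsto_le[OF trivial_limit_at_left_real lim tendsto_const ev])
    then show ?thesis unfolding M_def .
  qed
qed

end
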